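(* Let $\Omega$ be a set of additive functions $\psi:\mathcal{C}\to\mathbb{R}$ satisfying $|\psi(\mathcal{L})|\le g_4(\mathcal{L})$ for all $\mathcal{L}\in\mathcal{C}$, and let $\nu_1,\nu_2:\mathcal{C}\to\mathbb{Z}$ be additive functions. If $\mathcal{K},\mathcal{J}\in\mathcal{C}$ satisfy $\nu_1(\mathcal{K})=1$ and $\nu_2(\mathcal{J})=1$, then \[\delta([\mathcal{K}],[\mathcal{J}])\ge\inf_{a,b\in\mathbb{Z},\ ab\neq0}\ \sup_{\psi\in\Omega}\ \big|a\psi(\mathcal{K})-b\psi(\mathcal{J})\big|.\]
   Context: $\mathcal{C}$ is the smooth knot concordance group; $g_4$ is the smooth four-genus; $d(\mathcal{K},\mathcal{J})=g_4(\mathcal{K}\,\#\,-\mathcal{J})$. Let $\mathcal{C}^\circ=\mathcal{C}\setminus\{0\}$; $\mathcal{K}\sim'\mathcal{J}$ if there exist $\mathcal{M}\in\mathcal{C}$ and $r,s\in\mathbb{Z}$ with $\mathcal{K}=r\mathcal{M}$, $\mathcal{J}=s\mathcal{M}$; $\sim$ is the equivalence relation generated by $\sim'$; $\mathbb{P}(\mathcal{C})=\mathcal{C}^\circ/\sim$. $\delta([\mathcal{K}],[\mathcal{J}])=\min\{d(\mathcal{K}',\mathcal{J}'):\mathcal{K}'\in[\mathcal{K}],\mathcal{J}'\in[\mathcal{J}]\}$. *)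

theory Defs
  imports Complex_Main "HOL-Library.Extended_Real"
begin

text \<open>The smooth concordance group is modelled abstractly as an abelian group
  (type class ab_group_add, written additively: connected sum is +, mirror-reverse is uminus,
  the unknot class is 0), together with a function g4 to the naturals (the smooth four-genus).\<close>

definition zsmul :: "int \<Rightarrow> 'a::ab_group_add \<Rightarrow> 'a" where
  "zsmul r M = (if 0 \<le> r then (\<Sum>_\<in>{..<nat r}. M) else - (\<Sum>_\<in>{..<nat (- r)}. M))"

definition additive :: "('a::ab_group_add \<Rightarrow> 'b::ab_group_add) \<Rightarrow> bool" where
  "additive f \<longleftrightarrow> (\<forall>x y. f (x + y) = f x + f y)"

definition dist4 :: "('a::ab_group_add \<Rightarrow> nat) \<Rightarrow> 'a \<Rightarrow> 'a \<Rightarrow> nat" where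
  "dist4 g4 K J = g4 (K + - J)"

definition sim1 :: "'a::ab_group_add \<Rightarrow> 'a \<Rightarrow> bool" where
  "sim1 K J \<longleftrightarrow> K \<noteq> 0 \<and> J \<noteq> 0 \<and> (\<exists>M r s. K = zsmul r M \<and> J = zsmul s M)"

text \<open>The equivalence class of K under the equivalence relation on C minus 0 generated by ~'
  (sim1 is reflexive and symmetric on nonzero elements, so its reflexive transitive closure
  restricted to nonzero elements is the generated equivalence).\<close>
definition proj_class :: "'a::ab_group_add \<Rightarrow> 'a set" where
  "proj_class K = {K'. K' \<noteq> 0 \<and> (K = K' \<or> (sim1\<^sup>*\<^sup>*) K K')}"

definition delta :: "('a::ab_group_add \<Rightarrow> nat) \<Rightarrow> 'a set \<Rightarrow> 'a set \<Rightarrow> nat" where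
  "delta g4 A B = Inf {dist4 g4 K' J' | K' J'. K' \<in> A \<and> J' \<in> B}"

end

theory Submission
  imports Defs
begin

lemma add_zero: "additive (f::'a::ab_group_add \<Rightarrow> 'b::ab_group_add) \<Longrightarrow> f 0 = 0"
  unfolding additive_def by (metis add.right_neutral add_left_cancel)

lemma add_neg: "additive (f::'a::ab_group_add \<Rightarrow> 'b::ab_group_add) \<Longrightarrow> f (- x) = - f x"
  using add_zero[of f] unfolding additive_def
  by (metis add.right_inverse neg_eq_iff_add_eq_0)

lemma add_sum: "additive (f::'a::ab_group_add \<Rightarrow> real) \<Longrightarrow>
   f (\<Sum>_\<in>{..<n}. M) = real n * f M"
proof (induction n)
  case 0 then show ?case using add_zero[of f] by simp
next
  case (Suc n)
  then show ?case unfolding additive_def by (simp add: algebra_simps)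
qed

lemma add_zsmul: "additive (f::'a::ab_group_add \<Rightarrow> real) \<Longrightarrow>
   f (zsmul r M) = of_int r * f M"
  unfolding zsmul_def using add_sum[of f] add_neg[of f] by auto

lemma zsmul0: "zsmul 0 M = 0" unfolding zsmul_def by simp

lemma chain:
  assumes "(sim1\<^sup>*\<^sup>*) K K'"
  shows "\<exists>p p'::int. p \<noteq> 0 \<and> p' \<noteq> 0 \<and>
     (\<forall>\<psi>::'a::ab_group_add \<Rightarrow> real. additive \<psi> \<longrightarrow> of_int p * \<psi> K' = of_int p' * \<psi> K)"
  using assms
proof (induction rule: rtranclp_induct)
  case base
  then show ?case by (rule exI[of _ 1], rule exI[of _ 1]) simp
next
  case (step y z)
  then obtain p p' where pp: "p \<noteq> 0" "p' \<noteq> 0"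
    "\<forall>\<psi>::'a \<Rightarrow> real. additive \<psi> \<longrightarrow> of_int p * \<psi> y = of_int p' * \<psi> K" by blast
  from step(2) obtain M r s where yz: "y \<noteq> 0" "z \<noteq> 0" "y = zsmul r M" "z = zsmul s M"
    unfolding sim1_def by blast
  have r: "r \<noteq> 0" using yz zsmul0 by metis
  have s: "s \<noteq> 0" using yz zsmul0 by metis
  show ?case
  proof (intro exI conjI allI impI)
    show "r * p \<noteq> 0" "s * p' \<noteq> 0" using r s pp by auto
    fix \<psi> :: "'a \<Rightarrow> real" assume a: "additive \<psi>"
    have "of_int (r*p) * \<psi> z = of_int p * (of_int s * (of_int r * \<psi> M))"
      using add_zsmul[OF a] yz by simp
    also have "\<dots> = of_int s * (of_int p * \<psi> y)"
      using add_zsmul[OF a] yz by simp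
    also have "\<dots> = of_int (s * p') * \<psi> K" using pp(3) a by simp
    finally show "of_int (r*p) * \<psi> z = of_int (s * p') * \<psi> K" .
  qed
qed

lemma class_mult:
  fixes \<nu> :: "'a::ab_group_add \<Rightarrow> int"
  assumes "additive \<nu>" "\<nu> K = 1" "K' \<in> proj_class K"
  shows "\<nu> K' \<noteq> 0 \<and> (\<forall>\<psi>::'a \<Rightarrow> real. additive \<psi> \<longrightarrow> \<psi> K' = of_int (\<nu> K') * \<psi> K)"
proof -
  have "\<exists>p p'::int. p \<noteq> 0 \<and> p' \<noteq> 0 \<and>
     (\<forall>\<psi>::'a \<Rightarrow> real. additive \<psi> \<longrightarrow> of_int p * \<psi> K' = of_int p' * \<psi> K)"
  proof (cases "K = K'")
    case True then show ?thesis by (intro exI[of _ 1]) simp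
  next
    case False then show ?thesis using assms(3) chain unfolding proj_class_def by blast
  qed
  then obtain p p' :: int where pp: "p \<noteq> 0" "p' \<noteq> 0"
    "\<forall>\<psi>::'a \<Rightarrow> real. additive \<psi> \<longrightarrow> of_int p * \<psi> K' = of_int p' * \<psi> K" by blast
  have an: "additive (\<lambda>x. real_of_int (\<nu> x))" using assms(1) unfolding additive_def by simp
  have "real_of_int p * real_of_int (\<nu> K') = real_of_int p'"
    using pp(3)[rule_format, OF an] assms(2) by simp
  hence e: "p * \<nu> K' = p'" by (metis of_int_eq_iff of_int_mult)
  show ?thesis
  proof (intro conjI allI impI)
    show "\<nu> K' \<noteq> 0" using e pp by auto
    fix \<psi> :: "'a \<Rightarrow> real" assume "additive \<psi>"
    hence "of_int p * \<psi> K' = of_int p * (of_int (\<nu> K') * \<psi> K)"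
      using pp(3) e by (metis mult.assoc of_int_mult)
    thus "\<psi> K' = of_int (\<nu> K') * \<psi> K" using pp(1) by simp
  qed
qed

theorem theorem7p3:
  fixes g4 :: "'c::ab_group_add \<Rightarrow> nat"
    and \<Omega> :: "('c \<Rightarrow> real) set"
    and \<nu>1 \<nu>2 :: "'c \<Rightarrow> int"
    and K J :: 'c
  assumes "\<forall>\<psi>\<in>\<Omega>. additive \<psi> \<and> (\<forall>L. \<bar>\<psi> L\<bar> \<le> real (g4 L))"
    and "additive \<nu>1" and "additive \<nu>2"
    and "\<nu>1 K = 1" and "\<nu>2 J = 1"
  shows "ereal (real (delta g4 (proj_class K) (proj_class J)))
           \<ge> (INF ab\<in>{(a::int, b::int). a * b \<noteq> 0}.
                SUP \<psi>\<in>\<Omega>. ereal \<bar>real_of_int (fst ab) * \<psi> K - real_of_int (snd ab) * \<psi> J\<bar>)"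
proof -
  have K0: "K \<noteq> 0" using assms(4) add_zero[OF assms(2)] by auto
  have J0: "J \<noteq> 0" using assms(5) add_zero[OF assms(3)] by auto
  have "K \<in> proj_class K" "J \<in> proj_class J" using K0 J0 unfolding proj_class_def by auto
  hence ne: "{dist4 g4 K' J' | K' J'. K' \<in> proj_class K \<and> J' \<in> proj_class J} \<noteq> {}" by blast
  obtain K' J' where kj: "K' \<in> proj_class K" "J' \<in> proj_class J"
    "delta g4 (proj_class K) (proj_class J) = dist4 g4 K' J'"
    using Inf_nat_def1[OF ne] unfolding delta_def by blast
  note c1 = class_mult[OF assms(2,4) kj(1)]
  note c2 = class_mult[OF assms(3,5) kj(2)]
  have mem: "(\<nu>1 K', \<nu>2 J') \<in> {(a::int, b::int). a * b \<noteq> 0}" using c1 c2 by simp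
  have "(SUP \<psi>\<in>\<Omega>. ereal \<bar>real_of_int (\<nu>1 K') * \<psi> K - real_of_int (\<nu>2 J') * \<psi> J\<bar>)
        \<le> ereal (real (dist4 g4 K' J'))"
  proof (rule SUP_least)
    fix \<psi> assume "\<psi> \<in> \<Omega>"
    hence a: "additive \<psi>" and b: "\<bar>\<psi> (K' + - J')\<bar> \<le> real (g4 (K' + - J'))" using assms(1) by auto
    have "\<psi> (K' + - J') = \<psi> K' - \<psi> J'" proof -
      have "\<psi> (K' + - J') = \<psi> K' + \<psi> (- J')" using a unfolding additive_def by blast
      thus ?thesis using add_neg[OF a, of J'] by simp
    qed
    also have "\<dots> = real_of_int (\<nu>1 K') * \<psi> K - real_of_int (\<nu>2 J') * \<psi> J"
      using c1 c2 a by presburger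
    finally show "ereal \<bar>real_of_int (\<nu>1 K') * \<psi> K - real_of_int (\<nu>2 J') * \<psi> J\<bar>
        \<le> ereal (real (dist4 g4 K' J'))" using b unfolding dist4_def by simp
  qed
  hence "(INF ab\<in>{(a::int, b::int). a * b \<noteq> 0}.
                SUP \<psi>\<in>\<Omega>. ereal \<bar>real_of_int (fst ab) * \<psi> K - real_of_int (snd ab) * \<psi> J\<bar>)
        \<le> ereal (real (dist4 g4 K' J'))"
    using INF_lower2[OF mem, of _ "ereal (real (dist4 g4 K' J'))"] by simp
  thus ?thesis using kj(3) by simp
qed

end
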